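(* Let $H$ satisfy (C3), (CNH), (CVX). Fix $T>0$ and a Lipschitz $W:\mathbb{R}\to\mathbb{R}$ with $I^{HJ}_T(W)\ne\emptyset$. Then for every $U_o\in I^{HJ}_T(W)$ and every $x\in\mathbb{R}$, $U_o(x)\ge U_o^*(x)$, where $U_o^*(x)=\sup\{W(q(T))-\int_0^TL(q(s),\dot q(s))\,ds:\ q\in\mathcal{R}_T,\ q(0)=x\}$.
   Context: (C3) $H\in C^3(\mathbb{R}^2;\mathbb{R})$; (CNH) there exists $X>0$ with $\partial_xH(x,p)=0$ whenever $|x|\ge X$; (CVX) for each $x$, $p\mapsto\partial_pH(x,p)$ is an increasing $C^1$-diffeomorphism of $\mathbb{R}$ onto itself. $L(x,v)=\sup_p(pv-H(x,p))$. $\mathcal{R}_T$: the $q\in C^1([0,T])$ such that some $p\in C^1([0,T])$ makes $(q,p)$ solve $\dot q=\partial_pH(q,p)$, $\dot p=-\partial_xH(q,p)$. $I^{HJ}_T(W)$: the set of Lipschitz $U_o$ such that the viscosity (Crandall–Lions) solution of $\partial_tU+H(x,\partial_xU)=0$, $U(0)=U_o$, equals $W$ at time $T$. *)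

theory Defs
  imports "HOL-Analysis.Analysis"
begin

definition pd1 :: "(real \<Rightarrow> real \<Rightarrow> real) \<Rightarrow> real \<Rightarrow> real \<Rightarrow> real" where
  "pd1 f x p = deriv (\<lambda>y. f y p) x"

definition pd2 :: "(real \<Rightarrow> real \<Rightarrow> real) \<Rightarrow> real \<Rightarrow> real \<Rightarrow> real" where
  "pd2 f x p = deriv (\<lambda>q. f x q) p"

fun Ck2 :: "nat \<Rightarrow> (real \<Rightarrow> real \<Rightarrow> real) \<Rightarrow> bool" where
  "Ck2 0 f = continuous_on UNIV (\<lambda>(x, p). f x p)"
| "Ck2 (Suc n) f =
     ((\<forall>x p. (\<lambda>y. f y p) differentiable (at x) \<and> (\<lambda>q. f x q) differentiable (at p))
      \<and> Ck2 n (pd1 f) \<and> Ck2 n (pd2 f) \<and> continuous_on UNIV (\<lambda>(x, p). f x p))"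

definition C3 :: "(real \<Rightarrow> real \<Rightarrow> real) \<Rightarrow> bool" where
  "C3 H \<longleftrightarrow> Ck2 3 H"

definition CNH :: "(real \<Rightarrow> real \<Rightarrow> real) \<Rightarrow> bool" where
  "CNH H \<longleftrightarrow> (\<exists>X>0. \<forall>x p. \<bar>x\<bar> \<ge> X \<longrightarrow> pd1 H x p = 0)"

definition C1_real :: "(real \<Rightarrow> real) \<Rightarrow> bool" where
  "C1_real g \<longleftrightarrow> (\<forall>y. g differentiable (at y)) \<and> continuous_on UNIV (deriv g)"

definition CVX :: "(real \<Rightarrow> real \<Rightarrow> real) \<Rightarrow> bool" where
  "CVX H \<longleftrightarrow> (\<forall>x. let g = (\<lambda>p. pd2 H x p) in
       mono g \<and> bij g \<and> C1_real g \<and> C1_real (inv g))"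

definition Lag :: "(real \<Rightarrow> real \<Rightarrow> real) \<Rightarrow> real \<Rightarrow> real \<Rightarrow> real" where
  "Lag H x v = (SUP p. p * v - H x p)"

definition C1_on :: "real \<Rightarrow> (real \<Rightarrow> real) \<Rightarrow> bool" where
  "C1_on T q \<longleftrightarrow> (\<exists>q'. (\<forall>t\<in>{0..T}. (q has_real_derivative q' t) (at t within {0..T}))
                      \<and> continuous_on {0..T} q')"

definition RT :: "(real \<Rightarrow> real \<Rightarrow> real) \<Rightarrow> real \<Rightarrow> (real \<Rightarrow> real) set" where
  "RT H T = {q. C1_on T q \<and> (\<exists>p. C1_on T p \<and>
      (\<forall>t\<in>{0..T}. (q has_real_derivative pd2 H (q t) (p t)) (at t within {0..T})
                 \<and> (p has_real_derivative - pd1 H (q t) (p t)) (at t within {0..T})))}"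

definition action :: "(real \<Rightarrow> real \<Rightarrow> real) \<Rightarrow> real \<Rightarrow> (real \<Rightarrow> real) \<Rightarrow> real" where
  "action H T q = integral {0..T} (\<lambda>s. Lag H (q s) (vector_derivative q (at s within {0..T})))"

text \<open>U_o^*(x), as an extended real supremum (so no convention for unbounded sets is needed).\<close>
definition Ustar :: "(real \<Rightarrow> real \<Rightarrow> real) \<Rightarrow> real \<Rightarrow> (real \<Rightarrow> real) \<Rightarrow> real \<Rightarrow> ereal" where
  "Ustar H T W x = (SUP q\<in>{q\<in>RT H T. q 0 = x}. ereal (W (q T) - action H T q))"

definition C1_test :: "(real \<Rightarrow> real \<Rightarrow> real) \<Rightarrow> (real \<Rightarrow> real \<Rightarrow> real) \<Rightarrow> (real \<Rightarrow> real \<Rightarrow> real) \<Rightarrow> bool" where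
  "C1_test \<phi> \<phi>t \<phi>x \<longleftrightarrow>
     (\<forall>t x. ((\<lambda>(s, y). \<phi> s y) has_derivative (\<lambda>(ds, dy). \<phi>t t x * ds + \<phi>x t x * dy)) (at (t, x)))
     \<and> continuous_on UNIV (\<lambda>(t, x). \<phi>t t x) \<and> continuous_on UNIV (\<lambda>(t, x). \<phi>x t x)"

definition visc_sub :: "(real \<Rightarrow> real \<Rightarrow> real) \<Rightarrow> real \<Rightarrow> (real \<Rightarrow> real \<Rightarrow> real) \<Rightarrow> bool" where
  "visc_sub H T U \<longleftrightarrow> (\<forall>\<phi> \<phi>t \<phi>x t x. C1_test \<phi> \<phi>t \<phi>x \<and> t \<in> {0<..<T} \<and>
      (\<exists>e>0. \<forall>s y. dist (s, y) (t, x) < e \<longrightarrow> U s y - \<phi> s y \<le> U t x - \<phi> t x)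
      \<longrightarrow> \<phi>t t x + H x (\<phi>x t x) \<le> 0)"

definition visc_super :: "(real \<Rightarrow> real \<Rightarrow> real) \<Rightarrow> real \<Rightarrow> (real \<Rightarrow> real \<Rightarrow> real) \<Rightarrow> bool" where
  "visc_super H T U \<longleftrightarrow> (\<forall>\<phi> \<phi>t \<phi>x t x. C1_test \<phi> \<phi>t \<phi>x \<and> t \<in> {0<..<T} \<and>
      (\<exists>e>0. \<forall>s y. dist (s, y) (t, x) < e \<longrightarrow> U s y - \<phi> s y \<ge> U t x - \<phi> t x)
      \<longrightarrow> \<phi>t t x + H x (\<phi>x t x) \<ge> 0)"

text \<open>U (as a function of time t and space x) is a viscosity solution on [0,T] x R,
  in the uniqueness class of Lipschitz functions on [0,T] x R.\<close>
definition visc_sol :: "(real \<Rightarrow> real \<Rightarrow> real) \<Rightarrow> real \<Rightarrow> (real \<Rightarrow> real \<Rightarrow> real) \<Rightarrow> bool" where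
  "visc_sol H T U \<longleftrightarrow> (\<exists>C. C-lipschitz_on ({0..T} \<times> UNIV) (\<lambda>(t, x). U t x))
     \<and> visc_sub H T U \<and> visc_super H T U"

definition IHJ :: "(real \<Rightarrow> real \<Rightarrow> real) \<Rightarrow> real \<Rightarrow> (real \<Rightarrow> real) \<Rightarrow> (real \<Rightarrow> real) set" where
  "IHJ H T W = {Uo. (\<exists>C. C-lipschitz_on UNIV Uo) \<and>
      (\<exists>U. visc_sol H T U \<and> U 0 = Uo \<and> U T = W)}"

end

theory Submission
  imports Defs
begin

lemma deriv_Un:
  assumes "(f has_real_derivative D) (at x within S)" "(f has_real_derivative D) (at x within T)"
  shows "(f has_real_derivative D) (at x within (S \<union> T))"
proof -
  have "((\<lambda>y. (f y - f x) / (y - x)) \<longlongrightarrow> D) (at x within (S \<union> T))"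
    unfolding at_within_union using assms[unfolded has_field_derivative_iff] by (rule filterlim_sup)
  then show ?thesis by (simp add: has_field_derivative_iff)
qed

lemma C1_ext:
  fixes f f' :: "real \<Rightarrow> real"
  assumes T: "T > 0"
    and d: "\<forall>t\<in>{0..T}. (f has_real_derivative f' t) (at t within {0..T})"
    and c: "continuous_on {0..T} f'"
  shows "\<exists>F F'. (\<forall>t. (F has_real_derivative F' t) (at t)) \<and> continuous_on UNIV F'
     \<and> (\<forall>t\<in>{0..T}. F t = f t \<and> F' t = f' t)"
proof -
  define c where "c t = max 0 (min T t)" for t
  define F where "F t = f (c t) + f' (c t) * (t - c t)" for t
  define F' where "F' t = f' (c t)" for t
  have cr: "c t \<in> {0..T}" for t using T by (auto simp: c_def)
  have cc: "continuous_on UNIV c" unfolding c_def by (intro continuous_intros)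
  have F'c: "continuous_on UNIV F'" unfolding F'_def
    by (rule continuous_on_compose2[OF c cc]) (use cr in auto)
  have eqin: "t \<in> {0..T} \<Longrightarrow> F t = f t \<and> F' t = f' t" for t
    by (auto simp: F_def F'_def c_def)
  have din: "(F has_real_derivative F' t) (at t within {0..T})" if "t \<in> {0..T}" for t
    using has_field_derivative_transform_within[OF d[rule_format, OF that] zero_less_one that, of F] eqin that
    by auto
  have dle: "(F has_real_derivative F' t) (at t within {..0})" if "t \<le> 0" for t
  proof -
    have "((\<lambda>s. f 0 + f' 0 * s) has_real_derivative f' 0) (at t within {..0})"
      by (auto intro!: derivative_eq_intros)
    moreover have "s \<in> {..0} \<Longrightarrow> f 0 + f' 0 * s = F s" for s using T by (auto simp: F_def c_def)
    ultimately show ?thesis using that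
      using has_field_derivative_transform_within[of _ "f' 0" t "{..0}" 1 F]
      by (auto simp: F'_def c_def)
  qed
  have dge: "(F has_real_derivative F' t) (at t within {T..})" if "t \<ge> T" for t
  proof -
    have "((\<lambda>s. f T + f' T * (s - T)) has_real_derivative f' T) (at t within {T..})"
      by (auto intro!: derivative_eq_intros)
    moreover have "s \<in> {T..} \<Longrightarrow> f T + f' T * (s - T) = F s" for s using T by (auto simp: F_def c_def)
    ultimately show ?thesis using that T
      using has_field_derivative_transform_within[of _ "f' T" t "{T..}" 1 F]
      by (auto simp: F'_def c_def)
  qed
  have "(F has_real_derivative F' t) (at t)" for t
  proof (cases "t \<le> 0")
    case True
    then have a: "(F has_real_derivative F' t) (at t within {..T})"
    proof (cases "t = 0")
      case True
      have "(F has_real_derivative F' t) (at t within ({..0} \<union> {0..T}))"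
        using deriv_Un[OF dle din] True T by auto
      moreover have "{..0} \<union> {0..T} = {..T}" using T by auto
      ultimately show ?thesis by simp
    next
      case False
      then have "t < 0" using True by auto
      have "at t within {..T} = at t"
        by (rule at_within_open_subset[of _ "{..<0}"]) (use \<open>t<0\<close> T in auto)
      moreover have "at t within {..0} = at t"
        by (rule at_within_open_subset[of _ "{..<0}"]) (use \<open>t<0\<close> T in auto)
      ultimately show ?thesis using dle[OF True] by simp
    qed
    have "at t within {..T} = at t"
      by (rule at_within_open_subset[of _ "{..<T}"]) (use True T in auto)
    then show ?thesis using a by simp
  next
    case False
    then have a: "(F has_real_derivative F' t) (at t within {0..})"
    proof (cases "t \<ge> T")
      case True
      have "(F has_real_derivative F' t) (at t within ({0..T} \<union> {T..}))"
      proof (cases "t = T")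
        case True then show ?thesis using deriv_Un[OF din dge] T by auto
      next
        case False
        then have "t > T" using \<open>t \<ge> T\<close> by auto
        have "at t within ({0..T} \<union> {T..}) = at t"
          by (rule at_within_open_subset[of _ "{T<..}"]) (use \<open>t>T\<close> T in auto)
        moreover have "at t within {T..} = at t"
          by (rule at_within_open_subset[of _ "{T<..}"]) (use \<open>t>T\<close> T in auto)
        ultimately show ?thesis using dge[OF True] by simp
      qed
      moreover have "{0..T} \<union> {T..} = {0..}" using T by auto
      ultimately show ?thesis by simp
    next
      case False
      have "at t within {0..T} = at t"
        by (rule at_within_open_subset[of _ "{0<..<T}"]) (use \<open>\<not> t \<le> 0\<close> False in auto)
      moreover have "at t within {0..} = at t"
        by (rule at_within_open_subset[of _ "{0<..}"]) (use \<open>\<not> t \<le> 0\<close> in auto)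
      ultimately show ?thesis using din[of t] \<open>\<not> t \<le> 0\<close> False by simp
    qed
    have "at t within {0..} = at t"
      by (rule at_within_open_subset[of _ "{0<..}"]) (use False in auto)
    then show ?thesis using a by simp
  qed
  then show ?thesis using F'c eqin by blast
qed


lemma convex_deriv:
  fixes G g :: "real \<Rightarrow> real"
  assumes d: "\<And>q. (G has_real_derivative g q) (at q)" and m: "mono g"
  shows "G p' \<ge> G P + g P * (p' - P)"
proof (cases "p' > P")
  case True
  obtain z where z: "P < z" "z < p'" "G p' - G P = (p' - P) * g z"
    using MVT2[OF True, of G g] d by blast
  have "g z \<ge> g P" using m z by (auto simp: mono_def)
  then have "(p' - P) * g z \<ge> (p' - P) * g P" using True by (intro mult_left_mono) auto
  then show ?thesis using z by (simp add: algebra_simps)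
next
  case False
  show ?thesis
  proof (cases "p' = P")
    case True then show ?thesis by simp
  next
    case False
    then have lt: "p' < P" using \<open>\<not> p' > P\<close> by auto
    obtain z where z: "p' < z" "z < P" "G P - G p' = (P - p') * g z"
      using MVT2[OF lt, of G g] d by blast
    have "g z \<le> g P" using m z by (auto simp: mono_def)
    then have "(P - p') * g z \<le> (P - p') * g P" using lt by (intro mult_left_mono) auto
    then show ?thesis using z by (simp add: algebra_simps)
  qed
qed

lemma C3_facts:
  assumes "C3 H"
  shows "continuous_on UNIV (\<lambda>(x, p). H x p)"
    and "continuous_on UNIV (\<lambda>(x, p). pd1 H x p)"
    and "continuous_on UNIV (\<lambda>(x, p). pd2 H x p)"
    and "\<And>x p. ((\<lambda>y. H y p) has_real_derivative pd1 H x p) (at x)"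
    and "\<And>x p. ((\<lambda>q. H x q) has_real_derivative pd2 H x p) (at p)"
proof -
  have c: "Ck2 3 H" using assms by (simp add: C3_def)
  then have a: "\<forall>x p. (\<lambda>y. H y p) differentiable (at x) \<and> (\<lambda>q. H x q) differentiable (at p)"
     and b: "Ck2 2 (pd1 H)" "Ck2 2 (pd2 H)" and cc: "continuous_on UNIV (\<lambda>(x, p). H x p)"
    by (simp_all add: eval_nat_numeral del: Ck2.simps(1)) 
  show "continuous_on UNIV (\<lambda>(x, p). H x p)" by (rule cc)
  show "continuous_on UNIV (\<lambda>(x, p). pd1 H x p)" using b(1) by (simp add: eval_nat_numeral)
  show "continuous_on UNIV (\<lambda>(x, p). pd2 H x p)" using b(2) by (simp add: eval_nat_numeral)
  show "((\<lambda>y. H y p) has_real_derivative pd1 H x p) (at x)" for x p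
    using a unfolding pd1_def by (simp add: DERIV_deriv_iff_real_differentiable)
  show "((\<lambda>q. H x q) has_real_derivative pd2 H x p) (at p)" for x p
    using a unfolding pd2_def by (metis DERIV_deriv_iff_real_differentiable)
qed

lemma cont_fst: "continuous_on UNIV F \<Longrightarrow> continuous_on UNIV (\<lambda>z::real\<times>real. F (fst z))"
  by (rule continuous_on_compose2[of UNIV F UNIV fst]) (auto intro: continuous_intros)

lemma test_fun:
  fixes A A' Q Q' h h' :: "real \<Rightarrow> real" and e :: real
  assumes dA: "\<And>t. (A has_real_derivative A' t) (at t)"
    and dQ: "\<And>t. (Q has_real_derivative Q' t) (at t)"
    and dh: "\<And>t. (h has_real_derivative h' t) (at t)"
    and cA: "continuous_on UNIV A'" and cQ: "continuous_on UNIV Q'" and ch: "continuous_on UNIV h'"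
  shows "C1_test (\<lambda>s y. A s + (y - Q s)^2 * e + h s)
      (\<lambda>s y. A' s - 2 * (y - Q s) * Q' s * e + h' s) (\<lambda>s y. 2 * (y - Q s) * e)"
proof -
  have cQ0: "continuous_on UNIV Q" using dQ by (intro DERIV_continuous_on) auto
  have fst: "((\<lambda>z::real\<times>real. F (fst z)) has_derivative (\<lambda>z. F' (fst w) * fst z)) (at w)"
    if "\<And>t. (F has_real_derivative F' t) (at t)" for F F' w
    using has_derivative_compose[OF has_derivative_fst[OF has_derivative_ident]
        has_field_derivative_imp_has_derivative[OF that]]
    by (simp add: mult.commute)
  have DD: "((\<lambda>z::real\<times>real. A (fst z) + (snd z - Q (fst z))^2 * e + h (fst z)) has_derivative
        (\<lambda>z. A' (fst w) * fst z + (2 * (snd w - Q (fst w)) * (snd z - Q' (fst w) * fst z)) * e + h' (fst w) * fst z)) (at w)"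
    for w
    by (auto intro!: derivative_eq_intros fst[OF dA] fst[OF dQ] fst[OF dh] simp: power2_eq_square algebra_simps)
  have "((\<lambda>(s, y). A s + (y - Q s)^2 * e + h s) has_derivative
       (\<lambda>(ds, dy). (A' t - 2 * (x - Q t) * Q' t * e + h' t) * ds + 2 * (x - Q t) * e * dy)) (at (t, x))" for t x
    unfolding case_prod_unfold
    by (rule has_derivative_eq_rhs[OF DD[of "(t, x)"]]) (auto simp: fun_eq_iff algebra_simps)
  moreover have "continuous_on UNIV (\<lambda>(t, x). A' t - 2 * (x - Q t) * Q' t * e + h' t)"
    unfolding case_prod_unfold
    by (intro continuous_intros cont_fst cA cQ ch cQ0)
  moreover have "continuous_on UNIV (\<lambda>(t, x). 2 * (x - Q t) * e)"
    unfolding case_prod_unfold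
    by (intro continuous_intros cont_fst cQ0)
  ultimately show ?thesis unfolding C1_test_def by auto
qed


lemma cont_bound:
  fixes f :: "'a::topological_space \<Rightarrow> real"
  assumes "continuous_on S f" "compact S"
  shows "\<exists>B\<ge>0. \<forall>x\<in>S. \<bar>f x\<bar> \<le> B"
proof -
  have "bounded (f ` S)" using assms by (intro compact_imp_bounded compact_continuous_image)
  then obtain a where "\<forall>y\<in>f ` S. norm y \<le> a" by (auto simp: bounded_iff)
  then show ?thesis by (intro exI[of _ "max a 0"]) auto
qed

lemma quad_bound:
  fixes C r k \<epsilon> :: real
  assumes "k = 1/\<epsilon>" "\<epsilon> > 0"
  shows "C*r - r^2*k \<le> C^2*\<epsilon>/4"
proof -
  have "0 \<le> (r - C*\<epsilon>/2)^2 / \<epsilon>" using assms by simp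
  also have "\<dots> = r^2*k - C*r + C^2*\<epsilon>/4" using assms by (simp add: field_simps power2_eq_square)
  finally show ?thesis by simp
qed

lemma main:
  fixes H :: "real \<Rightarrow> real \<Rightarrow> real" and U :: "real \<Rightarrow> real \<Rightarrow> real" and q p :: "real \<Rightarrow> real"
  assumes C3: "C3 H" and mono: "\<And>x. mono (pd2 H x)" and T: "T > 0"
    and L: "C-lipschitz_on ({0..T} \<times> UNIV) (\<lambda>(t, x). U t x)"
    and sub: "visc_sub H T U"
    and dq: "\<forall>t\<in>{0..T}. (q has_real_derivative pd2 H (q t) (p t)) (at t within {0..T})"
    and cp: "continuous_on {0..T} p"
  shows "U T (q T) - integral {0..T} (\<lambda>t. p t * pd2 H (q t) (p t) - H (q t) (p t)) \<le> U 0 (q 0)"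
proof -
  note facts = C3_facts[OF C3]
  define v where "v t = pd2 H (q t) (p t)" for t
  define l where "l t = p t * v t - H (q t) (p t)" for t
  have cq: "continuous_on {0..T} q" using dq by (intro DERIV_continuous_on) auto
  have "continuous_on {0..T} (\<lambda>t. (\<lambda>(x, p). pd2 H x p) (q t, p t))"
    by (rule continuous_on_compose2[OF facts(3)]) (auto intro: continuous_intros cq cp)
  then have cv: "continuous_on {0..T} v" by (simp add: v_def)
  have "continuous_on {0..T} (\<lambda>t. (\<lambda>(x, p). H x p) (q t, p t))"
    by (rule continuous_on_compose2[OF facts(1)]) (auto intro: continuous_intros cq cp)
  then have cl: "continuous_on {0..T} l" unfolding l_def
    by (auto intro!: continuous_intros cp cv)
  define \<Lambda> where "\<Lambda> t = integral {0..t} l" for t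
  have d\<Lambda>: "\<forall>t\<in>{0..T}. (\<Lambda> has_real_derivative l t) (at t within {0..T})"
    using integral_has_vector_derivative[OF cl] unfolding \<Lambda>_def has_real_derivative_iff_has_vector_derivative
    by auto
  have dq': "\<forall>t\<in>{0..T}. (q has_real_derivative v t) (at t within {0..T})" using dq by (simp add: v_def)
  obtain Q Q' where dQ: "\<And>t. (Q has_real_derivative Q' t) (at t)" and cQ': "continuous_on UNIV Q'"
    and eQ: "\<And>t. t\<in>{0..T} \<Longrightarrow> Q t = q t \<and> Q' t = v t"
    using C1_ext[OF T dq' cv] by blast
  obtain A A' where dA: "\<And>t. (A has_real_derivative A' t) (at t)" and cA': "continuous_on UNIV A'"
    and eA: "\<And>t. t\<in>{0..T} \<Longrightarrow> A t = \<Lambda> t \<and> A' t = l t"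
    using C1_ext[OF T d\<Lambda> cl] by blast
  have cQ: "continuous_on UNIV Q" using dQ by (intro DERIV_continuous_on) auto
  have cA: "continuous_on UNIV A" using dA by (intro DERIV_continuous_on) auto
  have cU: "continuous_on ({0..T} \<times> UNIV) (\<lambda>(t, x). U t x)"
    by (rule lipschitz_on_continuous_on[OF L])
  have C0: "C \<ge> 0" using L by (auto simp: lipschitz_on_def)
  have Ulip: "\<bar>U t y - U t y'\<bar> \<le> C * \<bar>y - y'\<bar>" if "t \<in> {0..T}" for t y y'
    using lipschitz_onD[OF L, of "(t, y)" "(t, y')"] that by (simp add: dist_Pair_Pair dist_real_def)
  define g where "g t = U t (q t) - \<Lambda> t" for t
  have "continuous_on {0..T} (\<lambda>t. (\<lambda>(t, x). U t x) (t, q t))"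
    by (rule continuous_on_compose2[OF cU]) (auto intro: continuous_intros cq)
  moreover have "continuous_on {0..T} \<Lambda>" using d\<Lambda> by (intro DERIV_continuous_on) auto
  ultimately have cg: "continuous_on {0..T} g" unfolding g_def by (auto intro!: continuous_intros)
  have key: "g b \<le> g 0" if b: "b \<in> {0<..<T}" for b
  proof (rule ccontr)
    assume "\<not> g b \<le> g 0"
    define m where "m = g b - g 0"
    have m: "m > 0" using \<open>\<not> g b \<le> g 0\<close> by (simp add: m_def)
    obtain B where B0: "B \<ge> 0" and B: "\<And>t. t \<in> {0..T} \<Longrightarrow> \<bar>q t\<bar> \<le> B"
      using cont_bound[OF cq compact_Icc] by blast
    obtain G where G0: "G \<ge> 0" and G: "\<And>t. t \<in> {0..T} \<Longrightarrow> \<bar>g t\<bar> \<le> G"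
      using cont_bound[OF cg compact_Icc] by blast
    obtain M where M0: "M \<ge> 0" and
      M: "\<And>z. z \<in> {-(B+C)..B+C} \<times> {-(2*C)..2*C} \<Longrightarrow> \<bar>(\<lambda>(x, p). pd1 H x p) z\<bar> \<le> M"
      using cont_bound[OF continuous_on_subset[OF facts(2) subset_UNIV]
          compact_Times[OF compact_Icc compact_Icc]] by blast
    have b0: "0 < b" "b < T" using b by auto
    define \<eta> where "\<eta> = m/2"
    have \<eta>: "\<eta> > 0" using m by (simp add: \<eta>_def)
    define K where "K = (2*G + C^2 + 1) / (\<eta> * (T - b))"
    have K: "K > 0" using G0 \<eta> b0 by (auto simp: K_def intro!: divide_pos_pos add_nonneg_pos)
    have KT: "\<eta> * K * (T - b) = 2*G + C^2 + 1" using \<eta> b0 by (simp add: K_def)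
    define h where "h t = \<eta> * (exp (K * (t - b)) - 1)" for t
    define h' where "h' t = \<eta> * K * exp (K * (t - b))" for t
    have dh: "(h has_real_derivative h' t) (at t)" for t
      unfolding h_def h'_def by (auto intro!: derivative_eq_intros)
    have ch': "continuous_on UNIV h'" unfolding h'_def by (intro continuous_intros)
    have ch: "continuous_on UNIV h" unfolding h_def by (intro continuous_intros)
    define lam0 where "lam0 = \<eta> * K * exp (- (K * b))"
    have lam0: "lam0 > 0" using \<eta> K by (simp add: lam0_def)
    have hlow: "h t \<ge> - \<eta>" for t
    proof -
      have "\<eta> * (exp (K * (t - b)) - 1) \<ge> \<eta> * (- 1)" using \<eta> by (intro mult_left_mono) (auto simp: less_imp_le)
      then show ?thesis by (simp add: h_def)
    qed
    have hb: "h b = 0" by (simp add: h_def)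
    have hT: "h T \<ge> 2*G + C^2 + 1"
    proof -
      have e1: "exp (K * (T - b)) \<ge> 1 + K * (T - b)" by (rule exp_ge_add_one_self)
      have e2: "K * (T - b) \<le> exp (K * (T - b)) - 1" using e1 by linarith
      have "\<eta> * (exp (K * (T - b)) - 1) \<ge> \<eta> * (K * (T - b))" using mult_left_mono[OF e2, of \<eta>] \<eta> by simp
      then show ?thesis using KT by (simp add: h_def algebra_simps)
    qed
    have h'low: "h' t \<ge> lam0" if "t \<ge> 0" for t
    proof -
      have e1: "exp (- (K * b)) \<le> exp (K * (t - b))" using K that by (simp add: algebra_simps)
      show ?thesis unfolding h'_def lam0_def using \<eta> K by (intro mult_left_mono) (use e1 in auto)
    qed
    define a1 where "a1 = m / (2 * (C^2 + 1))"
    define a2 where "a2 = lam0 / (M * C + 1)"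
    have a1: "a1 > 0" using m by (auto simp: a1_def intro!: divide_pos_pos add_nonneg_pos)
    have a2: "a2 > 0" using lam0 M0 C0 by (auto simp: a2_def intro!: divide_pos_pos add_nonneg_pos)
    define \<epsilon> where "\<epsilon> = min 1 (min a1 a2) / 2"
    have \<epsilon>0: "\<epsilon> > 0" using a1 a2 by (auto simp: \<epsilon>_def)
    have \<epsilon>1: "\<epsilon> \<le> 1" by (auto simp: \<epsilon>_def)
    have \<epsilon>a1: "\<epsilon> < a1" using a1 by (auto simp: \<epsilon>_def)
    have \<epsilon>a2: "\<epsilon> < a2" using a2 by (auto simp: \<epsilon>_def)
    have \<epsilon>m: "C^2 * \<epsilon> < m/2"
    proof -
      have d: "(2 * (C^2 + 1)) > (0::real)" by (simp add: add_nonneg_pos)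
      have "\<epsilon> * (2 * (C^2 + 1)) < m" using \<epsilon>a1 unfolding a1_def pos_less_divide_eq[OF d] .
      moreover have "C^2 * \<epsilon> \<le> \<epsilon> * (C^2 + 1)" using \<epsilon>0 by (simp add: algebra_simps)
      ultimately show ?thesis by linarith
    qed
    have \<epsilon>l: "M * C * \<epsilon> < lam0"
    proof -
      have d: "M * C + 1 > 0" using M0 C0 by (simp add: add_nonneg_pos)
      have "\<epsilon> * (M * C + 1) < lam0" using \<epsilon>a2 unfolding a2_def pos_less_divide_eq[OF d] .
      moreover have "M * C * \<epsilon> \<le> \<epsilon> * (M * C + 1)" using \<epsilon>0 by (simp add: algebra_simps)
      ultimately show ?thesis by linarith
    qed
    define k where "k = 1 / \<epsilon>"
    have k0: "k > 0" using \<epsilon>0 by (simp add: k_def)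
    have k\<epsilon>: "k * \<epsilon> = 1" using \<epsilon>0 by (simp add: k_def)
    define \<Phi> where "\<Phi> s y = U s y - A s - (y - Q s)^2 * k - h s" for s y
    have \<Phi>eq: "\<Phi> t y = g t + (U t y - U t (q t)) - (y - q t)^2 * k - h t" if "t \<in> {0..T}" for t y
      using eQ[OF that] eA[OF that] by (simp add: \<Phi>_def g_def)
    have BB: "(U t y - U t (q t)) - (y - q t)^2 * k \<le> C^2 * \<epsilon> / 4" if "t \<in> {0..T}" for t y
    proof -
      have "U t y - U t (q t) \<le> C * \<bar>y - q t\<bar>" using Ulip[OF that, of y "q t"] by simp
      moreover have "C * \<bar>y - q t\<bar> - \<bar>y - q t\<bar>^2 * k \<le> C^2 * \<epsilon> / 4"
        by (rule quad_bound[OF k_def \<epsilon>0])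
      ultimately show ?thesis by simp
    qed
    have E0: "\<Phi> 0 y < g b" for y
    proof -
      have 1: "\<Phi> 0 y \<le> g 0 + C^2 * \<epsilon> / 4 + \<eta>" using \<Phi>eq[of 0 y] BB[of 0 y] hlow[of 0] T by auto
      have "C^2 * \<epsilon> \<ge> 0" using \<epsilon>0 by simp
      then have 2: "C^2 * \<epsilon> / 4 < m/2" using \<epsilon>m m by linarith
      have 3: "\<eta> = m/2" "m = g b - g 0" by (simp_all add: m_def \<eta>_def)
      show ?thesis using 1 2 3 by linarith
    qed
    have ET: "\<Phi> T y < g b" for y
    proof -
      have "\<Phi> T y \<le> g T + C^2 * \<epsilon> / 4 - h T" using \<Phi>eq[of T y] BB[of T y] T by auto
      moreover have "C^2 * \<epsilon> \<le> C^2" using \<epsilon>1 by (simp add: mult_left_le)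
      moreover have "g T \<le> G" "- g b \<le> G" using G[of T] G[of b] T b0 by auto
      moreover have "C^2 \<ge> 0" by simp
      ultimately show ?thesis using hT by linarith
    qed
    define R where "R = B + 1 + \<epsilon> * (C + 2*G + \<eta> + 1)"
    have RB: "R > B" using \<epsilon>0 C0 G0 \<eta> by (simp add: R_def add_nonneg_pos)
    have ER: "\<Phi> t y < g b" if t: "t \<in> {0..T}" and y: "\<bar>y\<bar> \<ge> R" for t y
    proof -
      define r where "r = \<bar>y - q t\<bar>"
      have r: "r \<ge> 1 + \<epsilon> * (C + 2*G + \<eta> + 1)" using B[OF t] y by (simp add: r_def R_def)
      have r1: "r \<ge> 1" using r \<epsilon>0 C0 G0 \<eta> by (smt (verit) mult_nonneg_nonneg)
      have "r * k \<ge> (C + 2*G + \<eta> + 1)"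
      proof -
        have "r * k \<ge> (\<epsilon> * (C + 2*G + \<eta> + 1)) * k" using r k0 by (intro mult_right_mono) auto
        also have "(\<epsilon> * (C + 2*G + \<eta> + 1)) * k = C + 2*G + \<eta> + 1" using \<epsilon>0 by (simp add: k_def)
        finally show ?thesis .
      qed
      then have rk: "r * k - C \<ge> 2*G + \<eta> + 1" by simp
      have "r * (r * k - C) \<ge> 1 * (r * k - C)" using r1 rk G0 \<eta> by (intro mult_right_mono) auto
      then have q1: "r^2 * k - C * r \<ge> 2*G + \<eta> + 1" using rk by (simp add: power2_eq_square algebra_simps)
      have "U t y - U t (q t) \<le> C * r" using Ulip[OF t, of y "q t"] by (simp add: r_def)
      moreover have "(y - q t)^2 * k = r^2 * k" by (simp add: r_def)
      moreover have "g t \<le> G" "- g b \<le> G" using G[OF t] G[of b] b0 by auto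
      ultimately show ?thesis using \<Phi>eq[OF t, of y] hlow[of t] q1 by linarith
    qed
    define S where "S = {0..T} \<times> {-R..R}"
    have cS: "compact S" unfolding S_def by (intro compact_Times compact_Icc)
    have bS: "(b, q b) \<in> S" using B[of b] b0 RB by (auto simp: S_def)
    have "continuous_on S (\<lambda>z. (\<lambda>(t, x). U t x) z - A (fst z) - (snd z - Q (fst z))^2 * k - h (fst z))"
      by (intro continuous_intros continuous_on_subset[OF cU] continuous_on_subset[OF cont_fst[OF cA]]
         continuous_on_subset[OF cont_fst[OF cQ]] continuous_on_subset[OF cont_fst[OF ch]])
         (auto simp: S_def)
    then have "continuous_on S (\<lambda>z. \<Phi> (fst z) (snd z))" by (simp add: \<Phi>_def case_prod_unfold)
    then obtain z0 where z0: "z0 \<in> S" and zmax: "\<And>z. z \<in> S \<Longrightarrow> \<Phi> (fst z) (snd z) \<le> \<Phi> (fst z0) (snd z0)"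
      using continuous_attains_sup[OF cS, of "\<lambda>z. \<Phi> (fst z) (snd z)"] bS by blast
    obtain t0 y0 where z0eq: "z0 = (t0, y0)" by (cases z0)
    have max: "\<And>s y. (s, y) \<in> S \<Longrightarrow> \<Phi> s y \<le> \<Phi> t0 y0" using zmax z0eq by fastforce
    have "\<Phi> b (q b) = g b" using \<Phi>eq[of b "q b"] b0 hb by simp
    then have big: "\<Phi> t0 y0 \<ge> g b" using max[OF bS] by simp
    have t0T: "t0 \<in> {0..T}" and y0R: "\<bar>y0\<bar> \<le> R" using z0 z0eq by (auto simp: S_def)
    have t00: "t0 \<noteq> 0" using E0[of y0] big by auto
    have t0T': "t0 \<noteq> T" using ET[of y0] big by auto
    have y0R': "\<bar>y0\<bar> < R" using ER[OF t0T, of y0] big by force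
    have t0i: "0 < t0" "t0 < T" using t0T t00 t0T' by auto
    define x0 where "x0 = q t0"
    have x0B: "\<bar>x0\<bar> \<le> B" using B[OF t0T] by (simp add: x0_def)
    have "(t0, x0) \<in> S" using x0B RB t0T by (auto simp: S_def)
    then have "\<Phi> t0 x0 \<le> \<Phi> t0 y0" by (rule max)
    then have "(y0 - x0)^2 * k \<le> U t0 y0 - U t0 x0"
      using \<Phi>eq[OF t0T, of x0] \<Phi>eq[OF t0T, of y0] by (simp add: x0_def)
    also have "\<dots> \<le> C * \<bar>y0 - x0\<bar>" using Ulip[OF t0T, of y0 x0] by simp
    finally have yx: "\<bar>y0 - x0\<bar>^2 * k \<le> C * \<bar>y0 - x0\<bar>" by simp
    have yxe: "\<bar>y0 - x0\<bar> \<le> C * \<epsilon>"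
    proof (cases "\<bar>y0 - x0\<bar> = 0")
      case True then show ?thesis using C0 \<epsilon>0 by simp
    next
      case False
      then have r0: "\<bar>y0 - x0\<bar> > 0" by simp
      have "\<bar>y0 - x0\<bar> * (\<bar>y0 - x0\<bar> * k) \<le> \<bar>y0 - x0\<bar> * C"
        using yx by (simp only: power2_eq_square mult_ac)
      then have "\<bar>y0 - x0\<bar> * k \<le> C" using r0 by (simp add: mult_le_cancel_left_pos)
      then have "\<bar>y0 - x0\<bar> * k * \<epsilon> \<le> C * \<epsilon>" using \<epsilon>0 by (intro mult_right_mono) auto
      then show ?thesis using k\<epsilon> by (simp add: mult.assoc)
    qed
    define P where "P = p t0"
    define \<pi> where "\<pi> = 2 * (y0 - x0) * k"
    have \<pi>B: "\<bar>\<pi>\<bar> \<le> 2 * C"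
    proof -
      have a: "\<bar>2 * (y0 - x0)\<bar> = 2 * \<bar>y0 - x0\<bar>" by (subst abs_mult) simp
      have "\<bar>\<pi>\<bar> = \<bar>2 * (y0 - x0)\<bar> * \<bar>k\<bar>" unfolding \<pi>_def by (rule abs_mult)
      also have "\<dots> = 2 * \<bar>y0 - x0\<bar> * k" using a k0 by simp
      also have "\<dots> \<le> 2 * (C * \<epsilon>) * k" using yxe k0 by (intro mult_right_mono) auto
      also have "\<dots> = 2 * C" using k\<epsilon> by (simp add: algebra_simps)
      finally show ?thesis .
    qed
    have Ce: "C * \<epsilon> \<le> C" using C0 \<epsilon>1 by (simp add: mult_left_le)
    have y0B: "\<bar>y0\<bar> \<le> B + C" using x0B yxe Ce by linarith
    define \<phi> where "\<phi> = (\<lambda>s y. A s + (y - Q s)^2 * k + h s)"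
    define \<phi>t where "\<phi>t = (\<lambda>s y. A' s - 2 * (y - Q s) * Q' s * k + h' s)"
    define \<phi>x where "\<phi>x = (\<lambda>s y. 2 * (y - Q s) * k)"
    have test: "C1_test \<phi> \<phi>t \<phi>x" unfolding \<phi>_def \<phi>t_def \<phi>x_def
      by (rule test_fun[OF dA dQ dh cA' cQ' ch'])
    define e where "e = min (min t0 (T - t0)) (R - \<bar>y0\<bar>)"
    have e0: "e > 0" using t0i y0R' by (simp add: e_def)
    have loc: "\<forall>s y. dist (s, y) (t0, y0) < e \<longrightarrow> U s y - \<phi> s y \<le> U t0 y0 - \<phi> t0 y0"
    proof (intro allI impI)
      fix s y assume d: "dist (s, y) (t0, y0) < e"
      have "dist s t0 < e" using dist_fst_le[of "(s, y)" "(t0, y0)"] d by simp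
      moreover have "dist y y0 < e" using dist_snd_le[of "(s, y)" "(t0, y0)"] d by simp
      ultimately have "(s, y) \<in> S" unfolding S_def e_def dist_real_def by auto
      then have "\<Phi> s y \<le> \<Phi> t0 y0" by (rule max)
      then show "U s y - \<phi> s y \<le> U t0 y0 - \<phi> t0 y0" by (simp add: \<Phi>_def \<phi>_def algebra_simps)
    qed
    have vis: "\<phi>t t0 y0 + H y0 (\<phi>x t0 y0) \<le> 0"
    proof -
      have "\<exists>e>0. \<forall>s y. dist (s, y) (t0, y0) < e \<longrightarrow> U s y - \<phi> s y \<le> U t0 y0 - \<phi> t0 y0"
        using loc e0 by blast
      moreover have "t0 \<in> {0<..<T}" using t0i by simp
      ultimately show ?thesis using sub test unfolding visc_sub_def by blast
    qed
    have ev: "\<phi>t t0 y0 = l t0 - \<pi> * v t0 + h' t0" "\<phi>x t0 y0 = \<pi>"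
      using eA[OF t0T] eQ[OF t0T] by (simp_all add: \<phi>t_def \<phi>x_def \<pi>_def x0_def algebra_simps)
    have vv: "v t0 = pd2 H x0 P" and ll: "l t0 = P * v t0 - H x0 P"
      by (simp_all add: v_def l_def x0_def P_def)
    have cvx: "H x0 \<pi> \<ge> H x0 P + pd2 H x0 P * (\<pi> - P)"
      using convex_deriv[of "\<lambda>q. H x0 q" "pd2 H x0", OF facts(5) mono] by simp
    have ineq: "h' t0 + H y0 \<pi> - H x0 \<pi> \<le> 0"
    proof -
      have "pd2 H x0 P * (\<pi> - P) = \<pi> * v t0 - P * v t0" using vv by (simp add: algebra_simps)
      then show ?thesis using vis ev cvx ll by simp
    qed
    have "norm (H y0 \<pi> - H x0 \<pi>) \<le> M * norm (y0 - x0)"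
    proof (rule field_differentiable_bound[of "{-(B+C)..B+C}" "\<lambda>y. H y \<pi>" "\<lambda>y. pd1 H y \<pi>"])
      show "convex {-(B+C)..B+C}" by simp
      show "((\<lambda>y. H y \<pi>) has_field_derivative pd1 H z \<pi>) (at z within {-(B+C)..B+C})" for z
        using facts(4) by (rule has_field_derivative_at_within)
      show "norm (pd1 H z \<pi>) \<le> M" if "z \<in> {-(B+C)..B+C}" for z
      proof -
        have "- (2 * C) \<le> \<pi> \<and> \<pi> \<le> 2 * C" using \<pi>B by arith
        then show ?thesis using M[of "(z, \<pi>)"] that by auto
      qed
      show "y0 \<in> {-(B+C)..B+C}" using y0B by auto
      show "x0 \<in> {-(B+C)..B+C}" using x0B C0 by auto
    qed
    then have "\<bar>H y0 \<pi> - H x0 \<pi>\<bar> \<le> M * \<bar>y0 - x0\<bar>" by simp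
    also have "\<dots> \<le> M * (C * \<epsilon>)" using yxe M0 by (intro mult_left_mono) auto
    finally have "\<bar>H y0 \<pi> - H x0 \<pi>\<bar> < lam0" using \<epsilon>l by (simp add: mult.assoc)
    moreover have "h' t0 \<ge> lam0" using h'low t0i by simp
    ultimately show False using ineq by linarith
  qed
  have "closure {0<..<T} = {0..T}" using T by simp
  then have "g T \<le> g 0"
    using continuous_le_on_closure[of "{0<..<T}" g T "g 0"] cg key T by auto
  moreover have "l = (\<lambda>t. p t * pd2 H (q t) (p t) - H (q t) (p t))" by (simp add: fun_eq_iff l_def v_def)
  ultimately show ?thesis by (simp add: g_def \<Lambda>_def)
qed


lemma Lag_eq:
  assumes C3: "C3 H" and mono: "mono (pd2 H x)"
  shows "Lag H x (pd2 H x P) = P * pd2 H x P - H x P"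
proof -
  have le: "p' * pd2 H x P - H x p' \<le> P * pd2 H x P - H x P" for p'
  proof -
    have "H x p' \<ge> H x P + pd2 H x P * (p' - P)"
      using convex_deriv[of "\<lambda>q. H x q" "pd2 H x", OF C3_facts(5)[OF C3] mono] by simp
    then show ?thesis by (simp add: algebra_simps)
  qed
  show ?thesis unfolding Lag_def
    by (rule cSup_eq_maximum) (use le in auto)
qed

theorem lemma5p7:
  fixes H :: "real \<Rightarrow> real \<Rightarrow> real" and T :: real and W :: "real \<Rightarrow> real"
  assumes "C3 H" and "CNH H" and "CVX H"
    and "T > 0"
    and "\<exists>C. C-lipschitz_on UNIV W"
    and "IHJ H T W \<noteq> {}"
  shows "\<forall>Uo\<in>IHJ H T W. \<forall>x. ereal (Uo x) \<ge> Ustar H T W x"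
proof (intro ballI allI)
  fix Uo x assume "Uo \<in> IHJ H T W"
  then obtain U C where L: "C-lipschitz_on ({0..T} \<times> UNIV) (\<lambda>(t, x). U t x)"
    and sub: "visc_sub H T U" and U0: "U 0 = Uo" and UT: "U T = W"
    unfolding IHJ_def visc_sol_def by blast
  have mono: "mono (pd2 H y)" for y using assms(3) by (simp add: CVX_def Let_def)
  show "ereal (Uo x) \<ge> Ustar H T W x"
    unfolding Ustar_def
  proof (rule SUP_least)
    fix q assume "q \<in> {q \<in> RT H T. q 0 = x}"
    then obtain p where q0: "q 0 = x" and cp1: "C1_on T p"
      and dq: "\<forall>t\<in>{0..T}. (q has_real_derivative pd2 H (q t) (p t)) (at t within {0..T})"
      unfolding RT_def by blast
    from cp1 obtain p' where "\<forall>t\<in>{0..T}. (p has_real_derivative p' t) (at t within {0..T})"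
      unfolding C1_on_def by blast
    then have cp: "continuous_on {0..T} p" by (intro DERIV_continuous_on) auto
    have m: "U T (q T) - integral {0..T} (\<lambda>t. p t * pd2 H (q t) (p t) - H (q t) (p t)) \<le> U 0 (q 0)"
      by (rule main[OF assms(1) mono assms(4) L sub dq cp])
    have "action H T q = integral {0..T} (\<lambda>t. p t * pd2 H (q t) (p t) - H (q t) (p t))"
      unfolding action_def
    proof (rule integral_cong)
      fix t assume t: "t \<in> {0..T}"
      have "vector_derivative q (at t within {0..T}) = pd2 H (q t) (p t)"
        using dq t assms(4) by (intro vector_derivative_within_closed_interval)
          (auto simp: has_real_derivative_iff_has_vector_derivative)
      then show "Lag H (q t) (vector_derivative q (at t within {0..T})) = p t * pd2 H (q t) (p t) - H (q t) (p t)"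
        using Lag_eq[OF assms(1) mono] by simp
    qed
    then show "ereal (W (q T) - action H T q) \<le> ereal (Uo x)"
      using m U0 UT q0 by simp
  qed
qed

end
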